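(* Let $s\in\mathbb N$, $n\in\mathbb N_0$, $0\le j\le n/2$ and $1\le\ell\le a^d_{n-2j}$. Then: (1) for $0\le k\le\lceil s/2\rceil-1$, $\Delta^kQ^{-s,n}_{j,\ell}(\xi)=\delta_{j,k}Y^{n-2j}_\ell(\xi)$ for all $\xi\in\mathbb S^{d-1}$; (2) if $s$ is even, $\Delta^{\lfloor s/2\rfloor}Q^{-s,n}_{j,\ell}(x)=2^s(n+\tfrac d2-s)_s\,P^{0,n-s}_{j-s/2,\ell}(x)$; (3) if $s$ is odd, $\Delta^{\lfloor s/2\rfloor}Q^{-s,n}_{j,\ell}(x)=2^{s-1}(n+\tfrac d2-s+1)_{s-1}P^{-1,n-s+1}_{j-\frac{s-1}2,\ell}(x)$ for $j\ne\lfloor s/2\rfloor$, and $\Delta^{\lfloor s/2\rfloor}Q^{-s,n}_{\lfloor s/2\rfloor,\ell}(x)=Y^{n-2\lfloor s/2\rfloor}_\ell(x)=P^{-1,n-s+1}_{0,\ell}(x)$.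
   Context: $\mathbb S^{d-1}$ is the unit sphere, $\langle f,g\rangle_{\mathbb S^{d-1}}=\frac1{\omega_d}\int fg\,d\sigma$. $(a)_0=1$, $(a)_m=a(a+1)\cdots(a+m-1)$. $\mathcal H^d_m$: homogeneous harmonic polynomials of degree $m$ in $d$ variables, $a^d_m=\dim\mathcal H^d_m$, $\{Y^m_\ell\}_{\ell=1}^{a^d_m}$ a basis orthonormal for $\langle\cdot,\cdot\rangle_{\mathbb S^{d-1}}$. Generalized Jacobi polynomials: for $\alpha,\beta\in\mathbb R$, $j\in\mathbb N_0$, let $j_0=-j-\alpha-\beta$ if this number lies in $\{1,\dots,j\}$ and $j_0=0$ otherwise; $\widehat P^{(\alpha,\beta)}_j(t)=\sum_{k=j_0}^j\frac{(k+\alpha+1)_{j-k}}{(j-k)!\,k!\,(j+\alpha+\beta+k+1)_{j-k}}\big(\frac{t-1}2\big)^k$. For $\mu\in\mathbb R$, $0\le j\le n/2$, $1\le\ell\le a^d_{n-2j}$: $P^{\mu,n}_{j,\ell}(x)=(n-j+\tfrac d2)_j\,\widehat P^{(\mu,n-2j+\frac d2-1)}_j(2\|x\|^2-1)\,Y^{n-2j}_\ell(x)$, and $P^{\mu,n}_{j,\ell}:=0$ if $j<0$ or $j>n/2$. For $m,j\in\mathbb N_0$ let $(c_i^{m,j})_{0\le i\le j}$ be the unique solution of $4^k\sum_{i=k}^j(-i)_k(-k)_{i-k}\frac{(m+d/2)_k}{(m+d/2)_{i-k}}c_i=\delta_{k,j}$, $0\le k\le j$, and $Y^{m,j}_\ell(x)=\sum_{i=0}^jc^{m,j}_i(1-\|x\|^2)^iY^m_\ell(x)$.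 Define $Q^{-s,n}_{j,\ell}$: if $j\ge s$, $Q^{-s,n}_{j,\ell}=P^{-s,n}_{j,\ell}$; if $\lceil s/2\rceil\le j\le s-1$, $Q^{-s,n}_{j,\ell}=P^{-s,n}_{j,\ell}-\sum_{k=0}^{\lceil s/2\rceil-1}\gamma_kY^{n-2j,k}_\ell$, where $\gamma_k$ is the constant with $\Delta^kP^{-s,n}_{j,\ell}(\xi)=\gamma_kY^{n-2j}_\ell(\xi)$ for all $\xi\in\mathbb S^{d-1}$ (note $\Delta^kP^{-s,n}_{j,\ell}(x)=q(\|x\|^2)Y^{n-2j}_\ell(x)$ for a univariate polynomial $q$, and $\gamma_k=q(1)$); if $0\le j\le\lceil s/2\rceil-1$, $Q^{-s,n}_{j,\ell}=Y^{n-2j,j}_\ell$. *)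

theory Defs
  imports "HOL-Analysis.Analysis"
begin

text \<open>Ambient space R^d is modelled by a Euclidean space 'a with d = DIM('a).\<close>

definition monomial :: "('a::euclidean_space \<Rightarrow> nat) \<Rightarrow> 'a \<Rightarrow> real" where
  "monomial \<alpha> x = (\<Prod>b\<in>Basis. (x \<bullet> b) ^ \<alpha> b)"

definition homog_poly :: "nat \<Rightarrow> ('a::euclidean_space \<Rightarrow> real) \<Rightarrow> bool" where
  "homog_poly m f \<longleftrightarrow> (\<exists>A c. finite A \<and> (\<forall>\<alpha>\<in>A. (\<Sum>b\<in>Basis. \<alpha> b) = m) \<and>
      f = (\<lambda>x. \<Sum>\<alpha>\<in>A. c \<alpha> * monomial \<alpha> x))"

definition laplacian :: "('a::euclidean_space \<Rightarrow> real) \<Rightarrow> 'a \<Rightarrow> real" where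
  "laplacian f x = (\<Sum>b\<in>Basis. deriv (deriv (\<lambda>t. f (x + t *\<^sub>R b))) 0)"

definition harmonic_space :: "nat \<Rightarrow> ('a::euclidean_space \<Rightarrow> real) set" where
  "harmonic_space m = {f. homog_poly m f \<and> laplacian f = (\<lambda>_. 0)}"

text \<open>Normalised sphere inner product (1/omega_d) int_S f g d sigma, via the cone measure:
  int_S h d sigma / omega_d = (1/vol B) int_B h(x/|x|) dx.\<close>
definition sph_inner :: "('a::euclidean_space \<Rightarrow> real) \<Rightarrow> ('a \<Rightarrow> real) \<Rightarrow> real" where
  "sph_inner f g = integral (ball 0 1) (\<lambda>x. f (x /\<^sub>R norm x) * g (x /\<^sub>R norm x))
      / measure lebesgue (ball (0::'a) 1)"

text \<open>For each m, Y m 1, ..., Y m (N m) is an orthonormal basis of H_m (so N m = a^d_m).\<close>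
definition orthonormal_harmonic_basis ::
    "(nat \<Rightarrow> nat) \<Rightarrow> (nat \<Rightarrow> nat \<Rightarrow> 'a::euclidean_space \<Rightarrow> real) \<Rightarrow> bool" where
  "orthonormal_harmonic_basis N Y \<longleftrightarrow> (\<forall>m.
     (\<forall>l\<in>{1..N m}. Y m l \<in> harmonic_space m) \<and>
     (\<forall>l\<in>{1..N m}. \<forall>l'\<in>{1..N m}. sph_inner (Y m l) (Y m l') = (if l = l' then 1 else 0)) \<and>
     (\<forall>f\<in>harmonic_space m. \<exists>c. f = (\<lambda>x. \<Sum>l=1..N m. c l * Y m l x)))"

definition jac_hat :: "real \<Rightarrow> real \<Rightarrow> nat \<Rightarrow> real \<Rightarrow> real" where
  "jac_hat \<alpha> \<beta> j t =
    (let v = - real j - \<alpha> - \<beta>;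
         j0 = (if \<exists>i\<in>{1..j}. v = real i then nat \<lfloor>v\<rfloor> else 0)
     in \<Sum>k=j0..j. pochhammer (real k + \<alpha> + 1) (j - k)
          / (fact (j - k) * fact k * pochhammer (real j + \<alpha> + \<beta> + real k + 1) (j - k))
          * ((t - 1) / 2) ^ k)"

definition genP :: "(nat \<Rightarrow> nat \<Rightarrow> 'a::euclidean_space \<Rightarrow> real) \<Rightarrow> real \<Rightarrow> int \<Rightarrow> int \<Rightarrow> nat \<Rightarrow> 'a \<Rightarrow> real" where
  "genP Y \<mu> n j l x =
    (if 0 \<le> j \<and> 2 * j \<le> n then
       pochhammer (real_of_int (n - j) + real DIM('a) / 2) (nat j)
       * jac_hat \<mu> (real_of_int (n - 2 * j) + real DIM('a) / 2 - 1) (nat j) (2 * norm x ^ 2 - 1)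
       * Y (nat (n - 2 * j)) l x
     else 0)"

definition ccoef :: "real \<Rightarrow> nat \<Rightarrow> nat \<Rightarrow> nat \<Rightarrow> real" where
  "ccoef d m j = (THE c. (\<forall>k\<le>j. 4 ^ k * (\<Sum>i=k..j. pochhammer (- real i) k * pochhammer (- real k) (i - k)
          * pochhammer (real m + d / 2) k / pochhammer (real m + d / 2) (i - k) * c i)
        = (if k = j then 1 else 0)) \<and> (\<forall>i>j. c i = 0))"

definition Yj :: "(nat \<Rightarrow> nat \<Rightarrow> 'a::euclidean_space \<Rightarrow> real) \<Rightarrow> nat \<Rightarrow> nat \<Rightarrow> nat \<Rightarrow> 'a \<Rightarrow> real" where
  "Yj Y m j l x = (\<Sum>i=0..j. ccoef (real DIM('a)) m j i * (1 - norm x ^ 2) ^ i * Y m l x)"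

definition gamma :: "(nat \<Rightarrow> nat \<Rightarrow> 'a::euclidean_space \<Rightarrow> real) \<Rightarrow> nat \<Rightarrow> nat \<Rightarrow> nat \<Rightarrow> nat \<Rightarrow> nat \<Rightarrow> real" where
  "gamma Y s n j l k = (THE \<gamma>. \<forall>\<xi>\<in>sphere 0 1.
      (laplacian ^^ k) (genP Y (- real s) (int n) (int j) l) \<xi> = \<gamma> * Y (n - 2 * j) l \<xi>)"

definition Q :: "(nat \<Rightarrow> nat \<Rightarrow> 'a::euclidean_space \<Rightarrow> real) \<Rightarrow> nat \<Rightarrow> nat \<Rightarrow> nat \<Rightarrow> nat \<Rightarrow> 'a \<Rightarrow> real" where
  "Q Y s n j l =
    (if s \<le> j then genP Y (- real s) (int n) (int j) l
     else if nat \<lceil>real s / 2\<rceil> \<le> j then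
       (\<lambda>x. genP Y (- real s) (int n) (int j) l x
            - (\<Sum>k<nat \<lceil>real s / 2\<rceil>. gamma Y s n j l k * Yj Y (n - 2 * j) k l x))
     else Yj Y (n - 2 * j) j l)"

end

theory Submission
  imports Defs "HOL-Computational_Algebra.Polynomial"
begin


definition Lop :: "real \<Rightarrow> real poly \<Rightarrow> real poly" where
  "Lop B p = smult 4 (pCons 0 (pderiv (pderiv p))) + smult (4*B) (pderiv p)"

lemma coeff_Lop: "coeff (Lop B p) b = 4 * (real b + 1) * (real b + B) * coeff p (Suc b)"
proof (cases b)
  case 0 then show ?thesis by (simp add: Lop_def coeff_pderiv)
next
  case (Suc b') then show ?thesis
    by (simp add: Lop_def coeff_pderiv algebra_simps)
qed

lemma coeff_Lop_pow:
  "coeff ((Lop B ^^ k) p) b = 4 ^ k * pochhammer (real b + 1) k * pochhammer (real b + B) k * coeff p (b + k)"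
proof (induction k arbitrary: b)
  case 0 then show ?case by simp
next
  case (Suc k)
  have "coeff ((Lop B ^^ Suc k) p) b = 4 * (real b + 1) * (real b + B) * coeff ((Lop B ^^ k) p) (Suc b)"
    by (simp add: coeff_Lop)
  also have "\<dots> = 4 * (real b + 1) * (real b + B) * (4 ^ k * pochhammer (real b + 2) k * pochhammer (real b + 1 + B) k * coeff p (b + Suc k))"
    by (simp add: Suc add.commute add.left_commute)
  finally show ?case by (simp add: pochhammer_rec algebra_simps)
qed



lemma coeff_lin_pow: "coeff ([:c, 1:] ^ k) a = of_nat (k choose a) * (c::real) ^ (k - a)"
proof (cases "a \<le> k")
  case True then show ?thesis using coeff_linear_poly_power[of a k c 1] by simp
next
  case False
  have "degree ([:c, 1:] ^ k) \<le> k"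
    by (metis degree_linear_power order_refl)
  then show ?thesis using False by (simp add: coeff_eq_0)
qed

lemma poch_reflect:
  assumes "i \<le> N"
  shows "pochhammer ((p::real) + real i) (N - i) = (-1)^(N-i) * pochhammer (- p - real N + 1) (N - i)"
proof -
  have eq: "p + real N - 1 - real (N - i) + 1 = p + real i" using assms by (simp add: of_nat_diff)
  have P0: "pochhammer (- (p + real N - 1)) (N - i) = (-1)^(N-i) * pochhammer (p + real i) (N - i)"
    using pochhammer_minus[of "p + real N - 1" "N - i", unfolded eq] .
  have E: "- p - real N + 1 = - (p + real N - 1)" by linarith
  have A: "pochhammer (- p - real N + 1) (N - i) = (-1)^(N-i) * pochhammer (p + real i) (N - i)"
    by (simp only: E P0)
  have "((-1::real)^(N-i)) * (-1)^(N-i) = 1" by (simp add: power_mult_distrib[symmetric])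
  then show ?thesis unfolding A by (simp add: mult.assoc[symmetric])
qed

lemma vandermonde_aux:
  "(\<Sum>i\<le>N. (-1)^i * real (N choose i) * pochhammer ((p::real) + real i) (N - i) * pochhammer (p + q) i)
     = pochhammer (- q) N"
proof -
  have "(\<Sum>i\<le>N. (-1)^i * real (N choose i) * pochhammer (p + real i) (N - i) * pochhammer (p + q) i)
      = (\<Sum>i\<le>N. (-1)^N * (real (N choose i) * pochhammer (p + q) i * pochhammer (- p - real N + 1) (N - i)))"
  proof (rule sum.cong[OF refl])
    fix i assume "i \<in> {..N}"
    then have iN: "i \<le> N" by simp
    have "(-1::real)^i * (-1)^(N-i) = (-1)^N"
      by (metis iN le_add_diff_inverse power_add)
    then show "(-1)^i * real (N choose i) * pochhammer (p + real i) (N - i) * pochhammer (p + q) i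
      = (-1)^N * (real (N choose i) * pochhammer (p + q) i * pochhammer (- p - real N + 1) (N - i))"
      using poch_reflect[OF iN, of p] by (simp add: algebra_simps)
  qed
  also have "\<dots> = (-1)^N * (\<Sum>i\<le>N. real (N choose i) * pochhammer (p + q) i * pochhammer (- p - real N + 1) (N - i))"
    by (simp add: sum_distrib_left)
  also have "\<dots> = (-1)^N * pochhammer ((p + q) + (- p - real N + 1)) N"
    by (subst pochhammer_binomial_sum) simp
  also have "(p + q) + (- p - real N + 1) = q - real N + 1" by simp
  also have "(-1)^N * pochhammer (q - real N + 1) N = pochhammer (- q) N"
    by (simp add: pochhammer_minus)
  finally show ?thesis .
qed

definition j0f :: "real \<Rightarrow> real \<Rightarrow> nat \<Rightarrow> nat" where
  "j0f \<alpha> \<beta> j = (let v = - real j - \<alpha> - \<beta> in if \<exists>i\<in>{1..j}. v = real i then nat \<lfloor>v\<rfloor> else 0)"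

definition Acf :: "real \<Rightarrow> real \<Rightarrow> nat \<Rightarrow> nat \<Rightarrow> real" where
  "Acf \<alpha> \<beta> j k = pochhammer (real k + \<alpha> + 1) (j - k)
          / (fact (j - k) * fact k * pochhammer (real j + \<alpha> + \<beta> + real k + 1) (j - k))"

definition JP :: "real \<Rightarrow> real \<Rightarrow> nat \<Rightarrow> real poly" where
  "JP \<alpha> \<beta> j = (\<Sum>k = j0f \<alpha> \<beta> j..j. smult (Acf \<alpha> \<beta> j k) ([:-1,1:]^k))"

lemma jac_hat_JP: "jac_hat \<alpha> \<beta> j (2*r - 1) = poly (JP \<alpha> \<beta> j) r"
proof -
  have E: "(2 * r - 1 - 1) / 2 = r - 1" by (simp add: field_simps)
  show ?thesis unfolding jac_hat_def E by (simp add: poly_sum JP_def j0f_def Acf_def Let_def)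
qed

definition Bf :: "real \<Rightarrow> real \<Rightarrow> nat \<Rightarrow> nat \<Rightarrow> real" where
  "Bf \<alpha> \<beta> j a = (if a \<le> j then (-1)^(j-a) * pochhammer (\<beta> + real a + 1) (j-a)
       / (fact a * fact (j-a) * pochhammer (real j + \<alpha> + \<beta> + 1 + real a) (j-a)) else 0)"

lemma j0f_le: "j0f \<alpha> \<beta> j \<le> j"
  unfolding j0f_def Let_def by auto

lemma j0f_gt:
  assumes "i \<in> {1..j}" "- real j - \<alpha> - \<beta> = real i"
  shows "j0f \<alpha> \<beta> j = i"
  using assms unfolding j0f_def Let_def by auto

lemma coeff_JP:
  assumes a: "j0f \<alpha> \<beta> j \<le> a"
  shows "coeff (JP \<alpha> \<beta> j) a = Bf \<alpha> \<beta> j a"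
proof -
  have cJ: "coeff (JP \<alpha> \<beta> j) a = (\<Sum>k = j0f \<alpha> \<beta> j..j. Acf \<alpha> \<beta> j k * (real (k choose a) * (-1)^(k-a)))"
    unfolding JP_def by (simp add: coeff_sum coeff_lin_pow)
  show ?thesis
  proof (cases "a \<le> j")
    case False
    have "(\<Sum>k = j0f \<alpha> \<beta> j..j. Acf \<alpha> \<beta> j k * (real (k choose a) * (-1)^(k-a))) = 0"
      using False by (intro sum.neutral) auto
    then show ?thesis unfolding cJ Bf_def using False by simp
  next
    case True
    define N where "N = j - a"
    define c where "c = real j + \<alpha> + \<beta> + 1 + real a"
    define p where "p = real a + \<alpha> + 1"
    define q where "q = real j + \<beta>"
    have jN: "j = a + N" using True N_def by simp
    have cpq: "c = p + q" unfolding c_def p_def q_def by simp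
    have cN: "pochhammer c N \<noteq> 0"
    proof
      assume "pochhammer c N = 0"
      then obtain k where k: "k < N" "c = - real k" by (auto simp: pochhammer_eq_0_iff)
      have "- real j - \<alpha> - \<beta> = real (a + 1 + k)" using k(2) unfolding c_def by simp
      moreover have "a + 1 + k \<in> {1..j}" using k(1) jN by simp
      ultimately have "j0f \<alpha> \<beta> j = a + 1 + k" by (rule j0f_gt[rotated])
      with a show False by simp
    qed
    have "coeff (JP \<alpha> \<beta> j) a = (\<Sum>k = a..j. Acf \<alpha> \<beta> j k * (real (k choose a) * (-1)^(k-a)))"
    proof -
      have "{j0f \<alpha> \<beta> j..j} = {j0f \<alpha> \<beta> j..<a} \<union> {a..j}" using a True by auto
      moreover have "(\<Sum>k \<in> {j0f \<alpha> \<beta> j..<a}. Acf \<alpha> \<beta> j k * (real (k choose a) * (-1)^(k-a))) = 0"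
        by (intro sum.neutral) auto
      ultimately show ?thesis unfolding cJ
        by (simp add: sum.union_disjoint ivl_disj_int)
    qed
    also have "\<dots> = (\<Sum>i = 0..N. Acf \<alpha> \<beta> j (i + a) * (real ((i + a) choose a) * (-1)^i))"
      using sum.shift_bounds_cl_nat_ivl[of "\<lambda>k. Acf \<alpha> \<beta> j k * (real (k choose a) * (-1)^(k-a))" 0 a N]
      by (simp add: jN add.commute)
    also have "\<dots> = (\<Sum>i\<le>N. ((-1)^i * real (N choose i) * pochhammer (p + real i) (N - i) * pochhammer (p + q) i)
                      / (fact a * fact N * pochhammer c N))"
    proof (rule sum.cong)
      fix i assume "i \<in> {..N}"
      then have iN: "i \<le> N" by simp
      have e1: "real (i + a) + \<alpha> + 1 = p + real i" unfolding p_def by simp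
      have e2: "real j + \<alpha> + \<beta> + real (i + a) + 1 = c + real i" unfolding c_def by simp
      have e3: "j - (i + a) = N - i" using jN by simp
      have pp: "pochhammer c N = pochhammer c i * pochhammer (c + real i) (N - i)"
        using pochhammer_product'[of c i "N - i"] iN by simp
      have ch: "real ((i + a) choose a) = fact (i + a) / (fact a * fact i)"
        by (simp add: binomial_fact)
      have chN: "real (N choose i) = fact N / (fact i * fact (N - i))"
        using iN by (simp add: binomial_fact)
      have ci: "pochhammer c i \<noteq> 0" using cN pp by auto
      have ci2: "pochhammer (c + real i) (N - i) \<noteq> 0" using cN pp by auto
      show "Acf \<alpha> \<beta> j (i + a) * (real ((i + a) choose a) * (-1)^i)
          = ((-1)^i * real (N choose i) * pochhammer (p + real i) (N - i) * pochhammer (p + q) i)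
                      / (fact a * fact N * pochhammer c N)"
        unfolding Acf_def e1 e2 e3 ch chN pp cpq[symmetric]
        using ci ci2 by (simp add: field_simps)
    qed (simp add: atLeast0AtMost)
    also have "\<dots> = pochhammer (- q) N / (fact a * fact N * pochhammer c N)"
      by (simp add: sum_divide_distrib[symmetric] vandermonde_aux)
    also have "\<dots> = Bf \<alpha> \<beta> j a"
    proof -
      have "pochhammer (- q) N = (-1)^N * pochhammer (q - real N + 1) N" by (rule pochhammer_minus)
      moreover have "q - real N + 1 = \<beta> + real a + 1" unfolding q_def using jN by simp
      ultimately have "pochhammer (- q) N = (-1)^N * pochhammer (\<beta> + real a + 1) N" by simp
      then show ?thesis unfolding Bf_def using True N_def c_def by simp
    qed
    finally show ?thesis .
  qed
qed



lemma coeff_omt_pow: "coeff ([:1, -1:] ^ i) a = (if a \<le> i then real (i choose a) * (-1)^a else (0::real))"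
proof (cases "a \<le> i")
  case True then show ?thesis using coeff_linear_poly_power[of a i 1 "-1::real"] by simp
next
  case False
  have "degree ([:1::real, -1:] ^ i) \<le> i"
    using degree_power_le[of "[:1::real, -1:]" i] by simp
  then show ?thesis using False by (simp add: coeff_eq_0)
qed

lemma poly_by_coeffs:
  fixes p :: "real poly"
  assumes "\<And>b. b > D \<Longrightarrow> coeff p b = 0"
  shows "poly p x = (\<Sum>b\<le>D. coeff p b * x ^ b)"
proof -
  have dg: "degree p \<le> D" using assms by (meson degree_le leI)
  have "poly p x = (\<Sum>b\<le>degree p. coeff p b * x ^ b)" by (rule poly_altdef)
  also have "\<dots> = (\<Sum>b\<le>D. coeff p b * x ^ b)"
    by (rule sum.mono_neutral_left) (use dg in \<open>auto simp: coeff_eq_0\<close>)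
  finally show ?thesis .
qed

lemma Lop_pow_add: "(Lop B ^^ r) (p + q) = (Lop B ^^ r) p + (Lop B ^^ r) q"
  by (rule poly_eqI) (simp add: coeff_Lop_pow algebra_simps)

lemma Lop_pow_diff: "(Lop B ^^ r) (p - q) = (Lop B ^^ r) p - (Lop B ^^ r) q"
  by (rule poly_eqI) (simp add: coeff_Lop_pow algebra_simps)

lemma Lop_pow_smult: "(Lop B ^^ r) (smult c p) = smult c ((Lop B ^^ r) p)"
  by (rule poly_eqI) (simp add: coeff_Lop_pow algebra_simps)

lemma Lop_pow_sum: "(Lop B ^^ r) (\<Sum>i\<in>A. f i) = (\<Sum>i\<in>A. (Lop B ^^ r) (f i))"
  by (rule poly_eqI) (simp add: coeff_Lop_pow coeff_sum sum_distrib_left)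

lemma Lop_pow_zero: "(Lop B ^^ r) 0 = 0"
  by (rule poly_eqI) (simp add: coeff_Lop_pow)

lemma pascal_diff:
  "(\<Sum>b\<le>Suc M. real (Suc M choose b) * (-1)^b * f b) = (\<Sum>b\<le>M. real (M choose b) * (-1)^b * (f b - f (Suc b)))"
proof -
  have A: "(\<Sum>b\<le>Suc M. real (Suc M choose b) * (-1)^b * f b)
      = f 0 + (\<Sum>b\<le>M. real (Suc M choose Suc b) * (-1)^Suc b * f (Suc b))"
    by (simp only: sum.atMost_Suc_shift) simp
  have B: "(\<Sum>b\<le>M. real (Suc M choose Suc b) * (-1)^Suc b * f (Suc b))
      = (\<Sum>b\<le>M. real (M choose b) * (-1)^Suc b * f (Suc b))
                  + (\<Sum>b\<le>M. real (M choose Suc b) * (-1)^Suc b * f (Suc b))"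
    by (simp only: binomial_Suc_Suc of_nat_add distrib_right sum.distrib)
  have C: "(\<Sum>b\<le>Suc M. real (M choose b) * (-1)^b * f b) = f 0 + (\<Sum>b\<le>M. real (M choose Suc b) * (-1)^Suc b * f (Suc b))"
    by (simp only: sum.atMost_Suc_shift) simp
  have D: "(\<Sum>b\<le>Suc M. real (M choose b) * (-1)^b * f b) = (\<Sum>b\<le>M. real (M choose b) * (-1)^b * f b)"
    by simp
  have E: "(\<Sum>b\<le>M. real (M choose b) * (-1)^b * (f b - f (Suc b)))
     = (\<Sum>b\<le>M. real (M choose b) * (-1)^b * f b) + (\<Sum>b\<le>M. real (M choose b) * (-1)^Suc b * f (Suc b))"
    by (simp add: sum.distrib[symmetric] algebra_simps)
  show ?thesis using A B C D E by simp
qed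

lemma sum_poch_diff:
  assumes "B > 0"
  shows "(\<Sum>b\<le>M. real (M choose b) * (-1)^b * pochhammer (B + real b) r)
        = pochhammer (- real r) M * pochhammer B r / pochhammer B M"
  using assms
proof (induction M arbitrary: B r)
  case 0 then show ?case by simp
next
  case (Suc M)
  have BM: "pochhammer B (Suc M) \<noteq> 0" using Suc.prems by (simp add: pochhammer_eq_0_iff)
  show ?case
  proof (cases r)
    case 0
    have "(\<Sum>b\<le>Suc M. real (Suc M choose b) * (-1)^b * pochhammer (B + real b) r) = 0"
      unfolding pascal_diff by (simp add: 0)
    moreover have "pochhammer (- real r) (Suc M) = 0" by (simp add: 0 pochhammer_0_left)
    ultimately show ?thesis by simp
  next
    case (Suc r')
    have d: "pochhammer (B + real b) r - pochhammer (B + real (Suc b)) r = - (real r' + 1) * pochhammer (B + 1 + real b) r'" for b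
    proof -
      have "pochhammer (B + real b) r = (B + real b) * pochhammer (B + real b + 1) r'"
        by (simp add: Suc pochhammer_rec)
      moreover have "pochhammer (B + real (Suc b)) r = (B + real b + 1 + real r') * pochhammer (B + real b + 1) r'"
        by (simp add: Suc pochhammer_rec' add_ac)
      ultimately show ?thesis by (simp add: algebra_simps)
    qed
    have "(\<Sum>b\<le>Suc M. real (Suc M choose b) * (-1)^b * pochhammer (B + real b) r)
        = (\<Sum>b\<le>M. real (M choose b) * (-1)^b * (- (real r' + 1) * pochhammer ((B + 1) + real b) r'))"
      unfolding pascal_diff d by (simp add: add_ac)
    also have "\<dots> = - (real r' + 1) * (\<Sum>b\<le>M. real (M choose b) * (-1)^b * pochhammer ((B + 1) + real b) r')"
      by (simp add: sum_distrib_left algebra_simps)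
    also have "\<dots> = - (real r' + 1) * (pochhammer (- real r') M * pochhammer (B + 1) r' / pochhammer (B + 1) M)"
      using Suc.IH[of "B + 1" r'] Suc.prems by simp
    also have "\<dots> = pochhammer (- real r) (Suc M) * pochhammer B r / pochhammer B (Suc M)"
    proof -
      have "pochhammer (- real r) (Suc M) = - (real r' + 1) * pochhammer (- real r') M"
        by (simp add: Suc pochhammer_rec add_ac)
      moreover have "pochhammer B r = B * pochhammer (B + 1) r'" by (simp add: Suc pochhammer_rec)
      moreover have "pochhammer B (Suc M) = B * pochhammer (B + 1) M" by (simp add: pochhammer_rec)
      ultimately show ?thesis using Suc.prems by simp
    qed
    finally show ?thesis .
  qed
qed

lemma poch_succ_fact: "pochhammer (real b + 1) r = fact (b + r) / fact b"
proof (induction r)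
  case 0 then show ?case by simp
next
  case (Suc r)
  have "pochhammer (real b + 1) (Suc r) = pochhammer (real b + 1) r * (real b + 1 + real r)"
    by (simp add: pochhammer_Suc)
  also have "\<dots> = fact (b + r) / fact b * (real b + 1 + real r)" using Suc.IH by simp
  also have "\<dots> = fact (b + Suc r) / fact b"
    by (simp add: algebra_simps)
  finally show ?case .
qed

definition Wc :: "real \<Rightarrow> nat \<Rightarrow> nat \<Rightarrow> real" where
  "Wc B k i = 4 ^ k * pochhammer (- real i) k * pochhammer (- real k) (i - k) * pochhammer B k / pochhammer B (i - k)"

lemma Lop_omt_small:
  assumes "i < r"
  shows "(Lop B ^^ r) ([:1, -1:] ^ i) = 0"
  by (rule poly_eqI) (use assms in \<open>simp add: coeff_Lop_pow coeff_omt_pow\<close>)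

lemma Lop_omt_val:
  assumes "r \<le> i" "B > 0"
  shows "poly ((Lop B ^^ r) ([:1, -1:] ^ i)) 1 = Wc B r i"
proof -
  define M where "M = i - r"
  have iM: "i = M + r" using assms M_def by simp
  have "poly ((Lop B ^^ r) ([:1, -1:] ^ i)) 1 = (\<Sum>b\<le>M. coeff ((Lop B ^^ r) ([:1, -1:] ^ i)) b * 1 ^ b)"
    by (rule poly_by_coeffs) (simp add: coeff_Lop_pow coeff_omt_pow iM)
  also have "\<dots> = (\<Sum>b\<le>M. 4 ^ r * (-1)^r * (fact i / fact M) * (real (M choose b) * (-1)^b * pochhammer (B + real b) r))"
  proof (rule sum.cong[OF refl])
    fix b assume "b \<in> {..M}"
    then have bM: "b \<le> M" by simp
    have c1: "real ((M + r) choose (b + r)) = fact (M + r) / (fact (b + r) * fact (M - b))"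
      using bM by (simp add: binomial_fact)
    have c2: "real (M choose b) = fact M / (fact b * fact (M - b))"
      using bM by (simp add: binomial_fact)
    have e: "i - (b + r) = M - b" using iM by simp
    have s: "(-1::real)^(b + r) = (-1)^r * (-1)^b" by (simp add: power_add)
    have p1: "pochhammer (1 + real b) r = fact (b + r) / fact b" using poch_succ_fact[of b r] by (simp add: add.commute)
    show "coeff ((Lop B ^^ r) ([:1, -1:] ^ i)) b * 1 ^ b
        = 4 ^ r * (-1)^r * (fact i / fact M) * (real (M choose b) * (-1)^b * pochhammer (B + real b) r)"
      unfolding iM using bM p1
      by (simp add: coeff_Lop_pow coeff_omt_pow poch_succ_fact p1 c1 c2 s add.commute field_simps)
  qed
  also have "\<dots> = 4 ^ r * (-1)^r * (fact i / fact M) * (\<Sum>b\<le>M. real (M choose b) * (-1)^b * pochhammer (B + real b) r)"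
    by (simp add: sum_distrib_left)
  also have "\<dots> = 4 ^ r * (-1)^r * (fact i / fact M) * (pochhammer (- real r) M * pochhammer B r / pochhammer B M)"
    using sum_poch_diff[OF assms(2)] by simp
  also have "\<dots> = Wc B r i"
  proof -
    have "pochhammer (- real i) r = (-1)^r * pochhammer (real i - real r + 1) r" by (rule pochhammer_minus)
    also have "real i - real r + 1 = real M + 1" using iM by simp
    also have "pochhammer (real M + 1) r = fact i / fact M" using iM by (simp add: poch_succ_fact)
    finally have "pochhammer (- real i) r = (-1)^r * (fact i / fact M)" .
    then show ?thesis unfolding Wc_def M_def by simp
  qed
  finally show ?thesis .
qed



lemma tri_unique:
  fixes T :: "nat \<Rightarrow> nat \<Rightarrow> real" and e :: "nat \<Rightarrow> real"
  assumes diag: "\<And>k. k \<le> j \<Longrightarrow> T k k \<noteq> 0"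
  shows "\<exists>!c. (\<forall>k\<le>j. (\<Sum>i=k..j. T k i * c i) = e k) \<and> (\<forall>i>j. c i = 0)"
proof -
  have ex: "u \<le> Suc j \<Longrightarrow> \<exists>c. (\<forall>k. Suc j - u \<le> k \<and> k \<le> j \<longrightarrow> (\<Sum>i=k..j. T k i * c i) = e k) \<and> (\<forall>i>j. c i = 0)" for u
  proof (induction u)
    case 0 then show ?case by (intro exI[of _ "\<lambda>_. 0"]) auto
  next
    case (Suc u)
    then obtain c where c: "\<forall>k. Suc j - u \<le> k \<and> k \<le> j \<longrightarrow> (\<Sum>i=k..j. T k i * c i) = e k" "\<forall>i>j. c i = 0"
      by auto
    define t where "t = j - u"
    have tj: "t \<le> j" and tu: "Suc t = Suc j - u" using Suc.prems t_def by auto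
    define c' where "c' = c(t := (e t - (\<Sum>i=Suc t..j. T t i * c i)) / T t t)"
    have rows: "(\<Sum>i=k..j. T k i * c' i) = (\<Sum>i=k..j. T k i * c i)" if "Suc t \<le> k" for k
      by (rule sum.cong) (use that in \<open>auto simp: c'_def\<close>)
    have rowt: "(\<Sum>i=t..j. T t i * c' i) = e t"
    proof -
      have "(\<Sum>i=t..j. T t i * c' i) = T t t * c' t + (\<Sum>i=Suc t..j. T t i * c' i)"
        using tj by (simp add: sum.atLeast_Suc_atMost)
      also have "(\<Sum>i=Suc t..j. T t i * c' i) = (\<Sum>i=Suc t..j. T t i * c i)"
        by (rule sum.cong) (auto simp: c'_def)
      finally show ?thesis using diag[OF tj] by (simp add: c'_def)
    qed
    show ?case
    proof (intro exI[of _ c'] conjI allI impI)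
      fix k assume k: "Suc j - Suc u \<le> k \<and> k \<le> j"
      show "(\<Sum>i=k..j. T k i * c' i) = e k"
      proof (cases "k = t")
        case True then show ?thesis using rowt by simp
      next
        case False
        then have "Suc t \<le> k" using k t_def by auto
        then show ?thesis using rows c(1) tu k by auto
      qed
    next
      fix i assume "i > j" then show "c' i = 0" using c(2) tj by (auto simp: c'_def)
    qed
  qed
  obtain c where c: "\<forall>k\<le>j. (\<Sum>i=k..j. T k i * c i) = e k" "\<forall>i>j. c i = 0"
    using ex[of "Suc j"] by auto
  have uniq: "c1 = c2" if h1: "\<forall>k\<le>j. (\<Sum>i=k..j. T k i * c1 i) = e k" "\<forall>i>j. c1 i = 0"
    and h2: "\<forall>k\<le>j. (\<Sum>i=k..j. T k i * c2 i) = e k" "\<forall>i>j. c2 i = 0" for c1 c2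
  proof
    fix i show "c1 i = c2 i"
    proof (induction "j - i" arbitrary: i rule: less_induct)
      case less
      show ?case
      proof (cases "i \<le> j")
        case False then show ?thesis using h1 h2 by auto
      next
        case True
        have eq: "(\<Sum>i'=Suc i..j. T i i' * c1 i') = (\<Sum>i'=Suc i..j. T i i' * c2 i')"
          by (rule sum.cong[OF refl]) (use less True in \<open>auto\<close>)
        have "T i i * c1 i + (\<Sum>i'=Suc i..j. T i i' * c1 i') = e i"
          using h1(1) True by (simp add: sum.atLeast_Suc_atMost)
        moreover have "T i i * c2 i + (\<Sum>i'=Suc i..j. T i i' * c2 i') = e i"
          using h2(1) True by (simp add: sum.atLeast_Suc_atMost)
        ultimately have "T i i * c1 i = T i i * c2 i" using eq by linarith
        then show ?thesis using diag[OF True] by simp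
      qed
    qed
  qed
  show ?thesis using c uniq by blast
qed

lemma Wc_diag: "B > 0 \<Longrightarrow> Wc B k k \<noteq> 0"
  unfolding Wc_def by (auto simp: pochhammer_same pochhammer_eq_0_iff)

lemma ccoef_sys:
  assumes "real m + d / 2 > 0"
  shows "\<forall>k\<le>j. (\<Sum>i=k..j. Wc (real m + d / 2) k i * ccoef d m j i) = (if k = j then 1 else 0)"
proof -
  let ?B = "real m + d / 2"
  let ?P = "\<lambda>c. (\<forall>k\<le>j. 4 ^ k * (\<Sum>i=k..j. pochhammer (- real i) k * pochhammer (- real k) (i - k)
          * pochhammer ?B k / pochhammer ?B (i - k) * c i)
        = (if k = j then 1 else (0::real))) \<and> (\<forall>i>j. c i = 0)"
  have eqv: "?P c \<longleftrightarrow> (\<forall>k\<le>j. (\<Sum>i=k..j. Wc ?B k i * c i) = (if k = j then 1 else 0)) \<and> (\<forall>i>j. c i = 0)" for c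
    by (simp add: Wc_def sum_distrib_left mult.assoc)
  have "\<exists>!c. (\<forall>k\<le>j. (\<Sum>i=k..j. Wc ?B k i * c i) = (if k = j then 1 else 0)) \<and> (\<forall>i>j. c i = 0)"
    by (rule tri_unique) (use Wc_diag assms in auto)
  then have "\<exists>!c. ?P c" using eqv by simp
  then have "?P (ccoef d m j)" unfolding ccoef_def by (rule theI')
  then show ?thesis using eqv by blast
qed

definition Yjp :: "real \<Rightarrow> nat \<Rightarrow> nat \<Rightarrow> real poly" where
  "Yjp d m k = (\<Sum>i=0..k. smult (ccoef d m k i) ([:1,-1:]^i))"

lemma Yj_eq: "Yj Y m k l x = poly (Yjp (real DIM('a)) m k) (norm x ^ 2) * Y m l (x::'a::euclidean_space)"
  unfolding Yj_def Yjp_def by (simp add: poly_sum sum_distrib_right mult.assoc)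

lemma coeff_Yjp_high: "a > k \<Longrightarrow> coeff (Yjp d m k) a = 0"
  unfolding Yjp_def by (simp add: coeff_sum coeff_omt_pow)

lemma Yjp_val:
  assumes B: "real m + d / 2 > 0"
  shows "poly ((Lop (real m + d / 2) ^^ r) (Yjp d m k)) 1 = (if r = k then 1 else 0)"
proof -
  let ?B = "real m + d / 2"
  have "poly ((Lop ?B ^^ r) (Yjp d m k)) 1 = (\<Sum>i=0..k. ccoef d m k i * poly ((Lop ?B ^^ r) ([:1,-1:]^i)) 1)"
    unfolding Yjp_def by (simp add: Lop_pow_sum Lop_pow_smult poly_sum)
  also have "\<dots> = (if r = k then 1 else 0)"
  proof (cases "r \<le> k")
    case True
    have "(\<Sum>i=0..k. ccoef d m k i * poly ((Lop ?B ^^ r) ([:1,-1:]^i)) 1)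
        = (\<Sum>i=0..<r. ccoef d m k i * poly ((Lop ?B ^^ r) ([:1,-1:]^i)) 1)
          + (\<Sum>i=r..k. ccoef d m k i * poly ((Lop ?B ^^ r) ([:1,-1:]^i)) 1)"
    proof -
      have "{0..k} = {0..<r} \<union> {r..k}" using True by auto
      then show ?thesis by (simp only:) (rule sum.union_disjoint, auto)
    qed
    also have "(\<Sum>i=0..<r. ccoef d m k i * poly ((Lop ?B ^^ r) ([:1,-1:]^i)) 1) = 0"
      by (intro sum.neutral) (auto simp: Lop_omt_small)
    also have "(\<Sum>i=r..k. ccoef d m k i * poly ((Lop ?B ^^ r) ([:1,-1:]^i)) 1)
             = (\<Sum>i=r..k. Wc ?B r i * ccoef d m k i)"
      by (rule sum.cong) (auto simp: Lop_omt_val B)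
    also have "\<dots> = (if r = k then 1 else 0)" using ccoef_sys[OF B, of k] True by blast
    finally show ?thesis by simp
  next
    case False
    then show ?thesis by (auto intro!: sum.neutral simp: Lop_omt_small)
  qed
  finally show ?thesis .
qed

lemma Yjp_top:
  assumes B: "real m + d / 2 > 0"
  shows "(Lop (real m + d / 2) ^^ k) (Yjp d m k) = [:1:]"
proof (rule poly_eqI)
  fix b
  let ?p = "(Lop (real m + d / 2) ^^ k) (Yjp d m k)"
  have hi: "coeff ?p b = 0" if "b > 0" for b
    using that by (simp add: coeff_Lop_pow coeff_Yjp_high)
  show "coeff ?p b = coeff [:1:] b"
  proof (cases b)
    case 0
    have "poly ?p 1 = (\<Sum>b\<le>0. coeff ?p b * 1 ^ b)" by (rule poly_by_coeffs) (simp add: hi)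
    then have "coeff ?p 0 = 1" using Yjp_val[OF B, of k k] by simp
    then show ?thesis using 0 by simp
  next
    case (Suc b') then show ?thesis using hi by simp
  qed
qed

lemma Yjp_high:
  assumes "k < r"
  shows "(Lop B ^^ r) (Yjp d m k) = 0"
  by (rule poly_eqI) (use assms in \<open>simp add: coeff_Lop_pow coeff_Yjp_high\<close>)



definition MP :: "('a::euclidean_space \<Rightarrow> nat) \<Rightarrow> 'a \<Rightarrow> 'a \<Rightarrow> real poly" where
  "MP \<alpha> x b = smult (\<Prod>b'\<in>Basis - {b}. (x \<bullet> b') ^ \<alpha> b') ([:x \<bullet> b, 1:] ^ \<alpha> b)"

lemma monomial_split:
  assumes "b \<in> Basis"
  shows "monomial \<alpha> x = (x \<bullet> b) ^ \<alpha> b * (\<Prod>b'\<in>Basis - {b}. (x \<bullet> b') ^ \<alpha> b')"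
  unfolding monomial_def using assms by (simp add: prod.remove)

lemma mono_line:
  assumes b: "b \<in> Basis"
  shows "monomial \<alpha> (x + t *\<^sub>R b) = poly (MP \<alpha> x b) t"
proof -
  have "(\<Prod>b'\<in>Basis - {b}. ((x + t *\<^sub>R b) \<bullet> b') ^ \<alpha> b') = (\<Prod>b'\<in>Basis - {b}. (x \<bullet> b') ^ \<alpha> b')"
    by (rule prod.cong) (use b in \<open>auto simp: inner_add_left inner_not_same_Basis\<close>)
  moreover have "(x + t *\<^sub>R b) \<bullet> b = x \<bullet> b + t" using b by (simp add: inner_add_left)
  ultimately show ?thesis
    using monomial_split[OF b, of \<alpha> "x + t *\<^sub>R b"] by (simp add: MP_def mult.commute)
qed

lemma mono_euler:
  assumes b: "b \<in> Basis"
  shows "(x \<bullet> b) * poly (pderiv (MP \<alpha> x b)) 0 = real (\<alpha> b) * monomial \<alpha> x"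
proof (cases "\<alpha> b")
  case 0 then show ?thesis by (simp add: MP_def pderiv_smult)
next
  case (Suc n)
  have "poly (pderiv (MP \<alpha> x b)) 0 = (\<Prod>b'\<in>Basis - {b}. (x \<bullet> b') ^ \<alpha> b') * (real (Suc n) * (x \<bullet> b) ^ n)"
    by (simp add: MP_def pderiv_smult pderiv_power Suc pderiv_pCons del: power_Suc)
  then show ?thesis using monomial_split[OF b, of \<alpha> x] Suc by (simp add: algebra_simps)
qed

lemma pderiv_sum': "pderiv (sum f A) = (\<Sum>x\<in>A. pderiv (f x))"
  using higher_pderiv_sum[of 1 f A] by simp

lemma deriv_poly_fun: "deriv (poly p) = poly (pderiv (p :: real poly))"
  by (rule ext, rule DERIV_imp_deriv) simp

lemma radial_pderiv2:
  fixes q H :: "real poly"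
  shows "poly (pderiv (pderiv (pcompose q [:r2, 2 * a, 1:] * H))) 0
    = poly q r2 * poly (pderiv (pderiv H)) 0 + 4 * a * poly (pderiv q) r2 * poly (pderiv H) 0
      + poly H 0 * (4 * poly (pderiv (pderiv q)) r2 * a ^ 2 + 2 * poly (pderiv q) r2)"
  by (simp add: pderiv_mult pderiv_pcompose poly_pcompose pderiv_pCons pderiv_add pderiv_smult algebra_simps power2_eq_square)

lemma norm_line:
  assumes b: "b \<in> Basis"
  shows "norm (x + t *\<^sub>R b) ^ 2 = poly [:x \<bullet> x, 2 * (x \<bullet> b), 1:] t"
proof -
  have bb: "b \<bullet> b = 1" using b by simp
  have "norm (x + t *\<^sub>R b) ^ 2 = (x + t *\<^sub>R b) \<bullet> (x + t *\<^sub>R b)" by (simp add: power2_norm_eq_inner)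
  also have "\<dots> = x \<bullet> x + 2 * t * (x \<bullet> b) + t * t * (b \<bullet> b)"
    by (simp add: inner_add_left inner_add_right inner_commute[of b x] algebra_simps)
  finally show ?thesis using bb by (simp add: algebra_simps)
qed

lemma lap_radial:
  fixes f :: "'a::euclidean_space \<Rightarrow> real"
  assumes "f \<in> harmonic_space m"
  shows "laplacian (\<lambda>x. poly q (norm x ^ 2) * f x)
       = (\<lambda>x. poly (Lop (real m + real DIM('a) / 2) q) (norm x ^ 2) * f x)"
proof
  fix x :: 'a
  from assms obtain A c where A: "finite A" "\<forall>\<alpha>\<in>A. (\<Sum>b\<in>Basis. \<alpha> b) = m"
      and f: "f = (\<lambda>x. \<Sum>\<alpha>\<in>A. c \<alpha> * monomial \<alpha> x)" and lap0: "laplacian f = (\<lambda>_. 0)"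
    unfolding harmonic_space_def homog_poly_def by auto
  define H where "H b = (\<Sum>\<alpha>\<in>A. smult (c \<alpha>) (MP \<alpha> x b))" for b
  have Hline: "(\<lambda>t. f (x + t *\<^sub>R b)) = poly (H b)" if "b \<in> Basis" for b
    using that by (auto simp: f H_def poly_sum mono_line)
  have H0: "poly (H b) 0 = f x" if "b \<in> Basis" for b
    using fun_cong[OF Hline[OF that], of 0] by simp
  have harm: "(\<Sum>b\<in>Basis. poly (pderiv (pderiv (H b))) 0) = 0"
  proof -
    have "laplacian f x = (\<Sum>b\<in>Basis. poly (pderiv (pderiv (H b))) 0)"
      unfolding laplacian_def by (intro sum.cong refl) (simp add: Hline deriv_poly_fun)
    then show ?thesis using lap0 by simp
  qed
  have euler: "(\<Sum>b\<in>Basis. (x \<bullet> b) * poly (pderiv (H b)) 0) = real m * f x"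
  proof -
    have "(\<Sum>b\<in>Basis. (x \<bullet> b) * poly (pderiv (H b)) 0)
        = (\<Sum>b\<in>Basis. \<Sum>\<alpha>\<in>A. c \<alpha> * ((x \<bullet> b) * poly (pderiv (MP \<alpha> x b)) 0))"
      by (simp add: H_def pderiv_sum' pderiv_smult poly_sum sum_distrib_left algebra_simps)
    also have "\<dots> = (\<Sum>b\<in>Basis. \<Sum>\<alpha>\<in>A. c \<alpha> * (real (\<alpha> b) * monomial \<alpha> x))"
      by (intro sum.cong refl) (simp add: mono_euler)
    also have "\<dots> = (\<Sum>\<alpha>\<in>A. c \<alpha> * (real (\<Sum>b\<in>Basis. \<alpha> b) * monomial \<alpha> x))"
      by (subst sum.swap) (simp add: sum_distrib_left sum_distrib_right algebra_simps)
    also have "\<dots> = real m * f x"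
      using A(2) by (simp add: f sum_distrib_left algebra_simps)
    finally show ?thesis .
  qed
  have sq: "(\<Sum>b\<in>Basis. (x \<bullet> b) ^ 2) = norm x ^ 2"
  proof -
    have "norm x ^ 2 = x \<bullet> x" by (rule power2_norm_eq_inner)
    also have "\<dots> = (\<Sum>b\<in>Basis. (x \<bullet> b) * (x \<bullet> b))" by (rule euclidean_inner)
    finally show ?thesis by (simp add: power2_eq_square)
  qed
  let ?r = "norm x ^ 2"
  have line: "(\<lambda>t. poly q (norm (x + t *\<^sub>R b) ^ 2) * f (x + t *\<^sub>R b))
      = poly (pcompose q [:?r, 2 * (x \<bullet> b), 1:] * H b)" if "b \<in> Basis" for b
  proof
    fix t
    show "poly q (norm (x + t *\<^sub>R b) ^ 2) * f (x + t *\<^sub>R b) = poly (pcompose q [:?r, 2 * (x \<bullet> b), 1:] * H b) t"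
      using fun_cong[OF Hline[OF that], of t] norm_line[OF that, of x t]
      by (simp add: poly_pcompose power2_norm_eq_inner)
  qed
  have "laplacian (\<lambda>x. poly q (norm x ^ 2) * f x) x
      = (\<Sum>b\<in>Basis. poly (pderiv (pderiv (pcompose q [:?r, 2 * (x \<bullet> b), 1:] * H b))) 0)"
    unfolding laplacian_def by (intro sum.cong refl) (simp add: line deriv_poly_fun)
  also have "\<dots> = (\<Sum>b\<in>Basis. poly q ?r * poly (pderiv (pderiv (H b))) 0
       + 4 * poly (pderiv q) ?r * ((x \<bullet> b) * poly (pderiv (H b)) 0)
       + f x * (4 * poly (pderiv (pderiv q)) ?r * (x \<bullet> b) ^ 2 + 2 * poly (pderiv q) ?r))"
    by (intro sum.cong refl, simp only: radial_pderiv2) (simp add: H0 algebra_simps)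
  also have "\<dots> = poly q ?r * (\<Sum>b\<in>Basis. poly (pderiv (pderiv (H b))) 0)
       + 4 * poly (pderiv q) ?r * (\<Sum>b\<in>Basis. (x \<bullet> b) * poly (pderiv (H b)) 0)
       + f x * (4 * poly (pderiv (pderiv q)) ?r * (\<Sum>b\<in>Basis. (x \<bullet> b) ^ 2) + 2 * poly (pderiv q) ?r * real DIM('a))"
    by (simp add: sum.distrib sum_distrib_left sum_distrib_right algebra_simps)
  also have "\<dots> = poly (Lop (real m + real DIM('a) / 2) q) ?r * f x"
    unfolding harm euler sq by (simp add: Lop_def algebra_simps)
  finally show "laplacian (\<lambda>x. poly q (norm x ^ 2) * f x) x = poly (Lop (real m + real DIM('a) / 2) q) ?r * f x" .
qed

lemma lap_radial_pow:
  fixes f :: "'a::euclidean_space \<Rightarrow> real"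
  assumes "f \<in> harmonic_space m"
  shows "(laplacian ^^ k) (\<lambda>x. poly q (norm x ^ 2) * f x)
       = (\<lambda>x. poly ((Lop (real m + real DIM('a) / 2) ^^ k) q) (norm x ^ 2) * f x)"
proof (induction k)
  case 0 then show ?case by simp
next
  case (Suc k) then show ?case by (simp add: lap_radial[OF assms])
qed



lemma j0f_le_v: "- real j - \<alpha> - \<beta> \<le> real t \<Longrightarrow> j0f \<alpha> \<beta> j \<le> t"
  unfolding j0f_def Let_def by auto

lemma JP_at1:
  assumes "j0f \<alpha> \<beta> j = 0"
  shows "poly (JP \<alpha> \<beta> j) 1 = Acf \<alpha> \<beta> j 0"
proof -
  have "poly (JP \<alpha> \<beta> j) 1 = (\<Sum>k=0..j. Acf \<alpha> \<beta> j k * (0::real) ^ k)"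
    unfolding JP_def assms by (simp add: poly_sum)
  also have "\<dots> = Acf \<alpha> \<beta> j 0"
    by (simp add: sum.atLeast_Suc_atMost[of 0 j, simplified] power_0_left)
  finally show ?thesis .
qed

lemma JP_at1_zero:
  assumes "j0f \<alpha> \<beta> j = 0" "pochhammer (\<alpha> + 1) j = 0"
  shows "poly (JP \<alpha> \<beta> j) 1 = 0"
  using assms by (simp add: JP_at1 Acf_def)

lemma Lop_shift:
  assumes k: "k \<le> j" and j1: "j0f \<alpha> \<beta> j \<le> k" and j2: "j0f \<alpha>' \<beta> (j - k) = 0"
    and al: "\<alpha>' = \<alpha> + 2 * real k" and B: "B = \<beta> + 1"
  shows "(Lop B ^^ k) (JP \<alpha> \<beta> j) = smult (4 ^ k * pochhammer (\<beta> + 1 + real j - real k) k) (JP \<alpha>' \<beta> (j - k))"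
proof (rule poly_eqI)
  fix b
  have L: "coeff ((Lop B ^^ k) (JP \<alpha> \<beta> j)) b = 4 ^ k * pochhammer (real b + 1) k * pochhammer (real b + B) k * Bf \<alpha> \<beta> j (b + k)"
    using j1 by (simp add: coeff_Lop_pow coeff_JP)
  have R: "coeff (smult (4 ^ k * pochhammer (\<beta> + 1 + real j - real k) k) (JP \<alpha>' \<beta> (j - k))) b
      = 4 ^ k * pochhammer (\<beta> + 1 + real j - real k) k * Bf \<alpha>' \<beta> (j - k) b"
    using j2 by (simp add: coeff_JP)
  show "coeff ((Lop B ^^ k) (JP \<alpha> \<beta> j)) b = coeff (smult (4 ^ k * pochhammer (\<beta> + 1 + real j - real k) k) (JP \<alpha>' \<beta> (j - k))) b"
  proof (cases "b + k \<le> j")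
    case False then show ?thesis unfolding L R Bf_def using k by auto
  next
    case True
    define N where "N = j - k - b"
    have jN: "j = N + b + k" using True N_def by simp
    have p1: "pochhammer (real b + 1) k = fact (b + k) / fact b" by (rule poch_succ_fact)
    have p2: "pochhammer (real b + B) k * pochhammer (\<beta> + real (b + k) + 1) N = pochhammer (\<beta> + real b + 1) (k + N)"
      using pochhammer_product'[of "\<beta> + real b + 1" k N] B by (simp add: add_ac)
    have p3: "pochhammer (\<beta> + real b + 1) N * pochhammer (\<beta> + 1 + real j - real k) k = pochhammer (\<beta> + real b + 1) (k + N)"
      using pochhammer_product'[of "\<beta> + real b + 1" N k] jN by (simp add: add_ac)
    have den: "real (j - k) + \<alpha>' + \<beta> + 1 + real b = real j + \<alpha> + \<beta> + 1 + real (b + k)"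
      using al k by (simp add: of_nat_diff)
    have e1: "j - (b + k) = N" "j - k - b = N" using jN by auto
    have LHS: "4 ^ k * pochhammer (real b + 1) k * pochhammer (real b + B) k * Bf \<alpha> \<beta> j (b + k)
        = 4 ^ k * (-1)^N * pochhammer (\<beta> + real b + 1) (k + N) / (fact b * fact N * pochhammer (real j + \<alpha> + \<beta> + 1 + real (b + k)) N)"
    proof -
      have "4 ^ k * pochhammer (real b + 1) k * pochhammer (real b + B) k * Bf \<alpha> \<beta> j (b + k)
         = 4 ^ k * (fact (b + k) / fact b) * (-1)^N * (pochhammer (real b + B) k * pochhammer (\<beta> + real (b + k) + 1) N)
            / (fact (b + k) * fact N * pochhammer (real j + \<alpha> + \<beta> + 1 + real (b + k)) N)"
        unfolding Bf_def p1 e1 using True by (simp add: algebra_simps)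
      also have "\<dots> = 4 ^ k * (-1)^N * pochhammer (\<beta> + real b + 1) (k + N) / (fact b * fact N * pochhammer (real j + \<alpha> + \<beta> + 1 + real (b + k)) N)"
        unfolding p2 by (simp add: field_simps)
      finally show ?thesis .
    qed
    have RHS: "4 ^ k * pochhammer (\<beta> + 1 + real j - real k) k * Bf \<alpha>' \<beta> (j - k) b
        = 4 ^ k * (-1)^N * pochhammer (\<beta> + real b + 1) (k + N) / (fact b * fact N * pochhammer (real j + \<alpha> + \<beta> + 1 + real (b + k)) N)"
    proof -
      have "b \<le> j - k" using True by simp
      then have "4 ^ k * pochhammer (\<beta> + 1 + real j - real k) k * Bf \<alpha>' \<beta> (j - k) b
          = 4 ^ k * (-1)^N * (pochhammer (\<beta> + real b + 1) N * pochhammer (\<beta> + 1 + real j - real k) k)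
             / (fact b * fact N * pochhammer (real j + \<alpha> + \<beta> + 1 + real (b + k)) N)"
        unfolding Bf_def e1 den by (simp add: algebra_simps)
      then show ?thesis unfolding p3 .
    qed
    show ?thesis unfolding L R LHS RHS ..
  qed
qed

lemma poch_const:
  assumes "R \<le> j"
  shows "pochhammer (z + real R) j * pochhammer z R = pochhammer (z + real (j - R)) (2 * R) * pochhammer z (j - R)"
proof -
  have "pochhammer z (R + j) = pochhammer z R * pochhammer (z + real R) j" by (rule pochhammer_product')
  moreover have "pochhammer z (j - R + 2 * R) = pochhammer z (j - R) * pochhammer (z + real (j - R)) (2 * R)"
    by (rule pochhammer_product')
  moreover have "j - R + 2 * R = R + j" using assms by simp
  ultimately show ?thesis by (simp add: mult.commute)
qed

lemma genP_eq:
  fixes Y :: "nat \<Rightarrow> nat \<Rightarrow> 'a::euclidean_space \<Rightarrow> real"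
  assumes "0 \<le> j" "2 * j \<le> n"
  shows "genP Y \<mu> n j l = (\<lambda>x. poly (smult (pochhammer (real_of_int (n - j) + real DIM('a) / 2) (nat j))
             (JP \<mu> (real_of_int (n - 2 * j) + real DIM('a) / 2 - 1) (nat j))) (norm x ^ 2) * Y (nat (n - 2 * j)) l x)"
  using assms by (auto simp: genP_def jac_hat_JP[symmetric])

lemma genP_neg:
  assumes "j < 0"
  shows "genP Y \<mu> n j l = (\<lambda>x. 0)"
  using assms by (auto simp: genP_def)

lemma Y_nonzero:
  fixes f :: "'a::euclidean_space \<Rightarrow> real"
  assumes "sph_inner f f = 1"
  shows "\<exists>\<xi>\<in>sphere 0 1. f \<xi> \<noteq> 0"
proof (rule ccontr)
  assume "\<not> ?thesis"
  then have z: "\<And>\<xi>. \<xi> \<in> sphere 0 1 \<Longrightarrow> f \<xi> = 0" by auto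
  have "integral (ball 0 1) (\<lambda>x. f (x /\<^sub>R norm x) * f (x /\<^sub>R norm x)) = integral (ball (0::'a) 1) (\<lambda>x. 0)"
  proof (rule integral_spike[of "{0}"])
    fix x assume "x \<in> ball (0::'a) 1 - {0}"
    then have "x /\<^sub>R norm x \<in> sphere 0 1" by auto
    then show "0 = f (x /\<^sub>R norm x) * f (x /\<^sub>R norm x)" using z by simp
  qed auto
  then have "sph_inner f f = 0" unfolding sph_inner_def by simp
  with assms show False by simp
qed

lemma gamma_val:
  fixes Y :: "'a::euclidean_space \<Rightarrow> real"
  assumes nz: "\<exists>\<xi>\<in>sphere 0 1. Y \<xi> \<noteq> 0"
    and F: "F = (\<lambda>x. poly p (norm x ^ 2) * Y x)"
  shows "(THE \<gamma>. \<forall>\<xi>\<in>sphere 0 1. F \<xi> = \<gamma> * Y \<xi>) = poly p 1"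
proof (rule the_equality)
  show "\<forall>\<xi>\<in>sphere 0 1. F \<xi> = poly p 1 * Y \<xi>" using F by simp
next
  fix \<gamma> assume h: "\<forall>\<xi>\<in>sphere 0 1. F \<xi> = \<gamma> * Y \<xi>"
  from nz obtain \<xi> where \<xi>: "\<xi> \<in> sphere 0 1" "Y \<xi> \<noteq> 0" by auto
  have a: "F \<xi> = \<gamma> * Y \<xi>" using h \<xi>(1) by blast
  have b: "F \<xi> = poly p 1 * Y \<xi>" using F \<xi>(1) by simp
  have "poly p 1 * Y \<xi> = \<gamma> * Y \<xi>" using a b by simp
  then show "\<gamma> = poly p 1" using \<xi>(2) by simp
qed



lemma JP_0: "JP \<alpha> \<beta> 0 = 1"
  by (simp add: JP_def j0f_def Acf_def)

theorem lemma3p7: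
  fixes Y :: "nat \<Rightarrow> nat \<Rightarrow> 'a::euclidean_space \<Rightarrow> real"
    and N :: "nat \<Rightarrow> nat"
    and s n j l :: nat
  assumes "DIM('a) \<ge> 2"
    and "orthonormal_harmonic_basis N Y"
    and "1 \<le> s"
    and "2 * j \<le> n"
    and "1 \<le> l" and "l \<le> N (n - 2 * j)"
  shows "(\<forall>k. k \<le> nat \<lceil>real s / 2\<rceil> - 1 \<longrightarrow>
            (\<forall>\<xi>\<in>sphere 0 1. (laplacian ^^ k) (Q Y s n j l) \<xi> = (if j = k then 1 else 0) * Y (n - 2 * j) l \<xi>))
       \<and> (even s \<longrightarrow>
            (laplacian ^^ (s div 2)) (Q Y s n j l) =
              (\<lambda>x. 2 ^ s * pochhammer (real n + real DIM('a) / 2 - real s) s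
                   * genP Y 0 (int n - int s) (int j - int s div 2) l x))
       \<and> (odd s \<longrightarrow>
            (j \<noteq> s div 2 \<longrightarrow>
               (laplacian ^^ (s div 2)) (Q Y s n j l) =
                 (\<lambda>x. 2 ^ (s - 1) * pochhammer (real n + real DIM('a) / 2 - real s + 1) (s - 1)
                      * genP Y (-1) (int n - int s + 1) (int j - (int s - 1) div 2) l x))
          \<and> (j = s div 2 \<longrightarrow>
               (laplacian ^^ (s div 2)) (Q Y s n j l) = Y (n - 2 * (s div 2)) l
               \<and> Y (n - 2 * (s div 2)) l = genP Y (-1) (int n - int s + 1) 0 l))"
proof -
  let ?d = "real DIM('a)"
  define m where "m = n - 2 * j"
  define B where "B = real m + ?d / 2"
  define \<beta> where "\<beta> = real m + ?d / 2 - 1"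
  have d2: "?d \<ge> 2" using assms(1) by simp
  have Bpos: "real m + ?d / 2 > 0" using d2 by simp
  have B\<beta>: "B = \<beta> + 1" unfolding B_def \<beta>_def by simp
  have \<beta>0: "\<beta> \<ge> 0" unfolding \<beta>_def using d2 by simp
  have mreal: "real m = real n - 2 * real j" unfolding m_def using assms(4) by (simp add: of_nat_diff)
  have lN: "l \<in> {1..N m}" using assms(5,6) m_def by simp
  have harm: "Y m l \<in> harmonic_space m" and nrm: "sph_inner (Y m l) (Y m l) = 1"
    using assms(2) lN unfolding orthonormal_harmonic_basis_def by auto
  have nz: "\<exists>\<xi>\<in>sphere 0 1. Y m l \<xi> \<noteq> 0" by (rule Y_nonzero[OF nrm])
  define Rf where "Rf q = (\<lambda>x. poly q (norm x ^ 2) * Y m l x)" for q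
  have lapR: "(laplacian ^^ k) (Rf q) = Rf ((Lop B ^^ k) q)" for k q
    unfolding Rf_def B_def by (rule lap_radial_pow[OF harm])
  have Rsph: "Rf q \<xi> = poly q 1 * Y m l \<xi>" if "\<xi> \<in> sphere 0 1" for q \<xi>
    using that unfolding Rf_def by simp
  have R0: "Rf 0 = (\<lambda>x. 0)" unfolding Rf_def by simp
  define K0 where "K0 = pochhammer (real n - real j + ?d / 2) j"
  define Pp where "Pp = smult K0 (JP (- real s) \<beta> j)"
  have genP_P: "genP Y (- real s) (int n) (int j) l = Rf Pp"
  proof -
    have e1: "nat (int n - 2 * int j) = m" unfolding m_def using assms(4) by simp
    have e2: "real_of_int (int n - 2 * int j) + ?d / 2 - 1 = \<beta>" unfolding \<beta>_def using mreal by simp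
    have e3: "real_of_int (int n - int j) = real n - real j" by simp
    have e4: "real n - 2 * real j + ?d / 2 - 1 = \<beta>" unfolding \<beta>_def using mreal by simp
    show ?thesis using assms(4)
      by (simp add: genP_eq e1 e2 e3 e4 Rf_def Pp_def K0_def)
  qed
  define Yp where "Yp k = Yjp ?d m k" for k
  have YjR: "Yj Y m k l = Rf (Yp k)" for k
    unfolding Rf_def Yp_def by (rule ext) (simp add: Yj_eq)
  have Yval: "poly ((Lop B ^^ r) (Yp k)) 1 = (if r = k then 1 else 0)" for r k
    unfolding B_def Yp_def by (rule Yjp_val[OF Bpos])
  have Ytop: "(Lop B ^^ k) (Yp k) = [:1:]" for k
    unfolding B_def Yp_def by (rule Yjp_top[OF Bpos])
  have Yhigh: "k < r \<Longrightarrow> (Lop B ^^ r) (Yp k) = 0" for k r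
    unfolding Yp_def by (rule Yjp_high)
  have gam: "gamma Y s n j l k = poly ((Lop B ^^ k) Pp) 1" for k
    unfolding gamma_def m_def[symmetric] genP_P lapR
    by (rule gamma_val[OF nz]) (simp add: Rf_def)
  define cs where "cs = nat \<lceil>real s / 2\<rceil>"
  define R where "R = s div 2"
  have csR: "cs = (if even s then R else R + 1)"
  proof (cases "even s")
    case True
    then have "real s / 2 = real R" unfolding R_def by (auto elim!: evenE)
    then show ?thesis using True unfolding cs_def by simp
  next
    case False
    then have sR: "s = 2 * R + 1" unfolding R_def by simp
    have "\<lceil>real s / 2\<rceil> = int R + 1"
      by (rule ceiling_unique) (simp_all add: sR)
    then show ?thesis using False unfolding cs_def by simp
  qed
  have sR: "s = 2 * R + (if even s then 0 else 1)" unfolding R_def by simp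
  have cs_le: "cs \<le> s" "1 \<le> cs" using csR sR assms(3) by (auto split: if_splits)
  have two_k: "2 * k < s" if "k < cs" for k using that csR sR by (auto split: if_splits)
  define Qp where "Qp = (if s \<le> j then Pp else if cs \<le> j then
        Pp - (\<Sum>k<cs. smult (poly ((Lop B ^^ k) Pp) 1) (Yp k)) else Yp j)"
  have QR: "Q Y s n j l = Rf Qp"
  proof -
    have mid: "(\<lambda>x. Rf Pp x - (\<Sum>k<cs. poly ((Lop B ^^ k) Pp) 1 * Rf (Yp k) x))
        = Rf (Pp - (\<Sum>k<cs. smult (poly ((Lop B ^^ k) Pp) 1) (Yp k)))"
      by (rule ext) (simp add: Rf_def poly_sum sum_distrib_right sum_distrib_left algebra_simps)
    show ?thesis
      unfolding Q_def cs_def[symmetric] m_def[symmetric] genP_P YjR gam Qp_def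
      using mid by simp
  qed
  have lapQ: "(laplacian ^^ k) (Q Y s n j l) = Rf ((Lop B ^^ k) Qp)" for k
    by (simp add: QR lapR)
  have shiftP: "(Lop B ^^ k) Pp = smult (K0 * (4 ^ k * pochhammer (\<beta> + 1 + real j - real k) k))
          (JP (- real s + 2 * real k) \<beta> (j - k))"
    if "k \<le> j" "j0f (- real s) \<beta> j \<le> k" "j0f (- real s + 2 * real k) \<beta> (j - k) = 0" for k
    unfolding Pp_def Lop_pow_smult using Lop_shift[OF that refl B\<beta>] by simp
  have P1: "poly ((Lop B ^^ k) Qp) 1 = (if j = k then 1 else 0)" if kcs: "k < cs" for k
  proof (cases "s \<le> j")
    case True
    have jk: "j \<noteq> k" "k \<le> j" using kcs cs_le True by auto
    have sk: "2 * k < s" by (rule two_k[OF kcs])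
    have a: "j0f (- real s) \<beta> j \<le> k" by (rule j0f_le_v) (use True \<beta>0 in simp)
    have b: "j0f (- real s + 2 * real k) \<beta> (j - k) = 0"
      using j0f_le_v[of "j - k" "- real s + 2 * real k" \<beta> 0] True \<beta>0 jk by (simp add: of_nat_diff)
    have c: "pochhammer (- real s + 2 * real k + 1) (j - k) = 0"
    proof -
      have "- real s + 2 * real k + 1 = - real (s - 2 * k - 1)" using sk by (simp add: of_nat_diff)
      moreover have "s - 2 * k - 1 < j - k" using sk True by simp
      ultimately show ?thesis by (auto simp: pochhammer_eq_0_iff)
    qed
    have "poly ((Lop B ^^ k) Pp) 1 = 0"
      using shiftP[OF jk(2) a b] JP_at1_zero[OF b c] by simp
    then show ?thesis using True jk unfolding Qp_def by simp
  next
    case False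
    show ?thesis
    proof (cases "cs \<le> j")
      case True
      have jk: "j \<noteq> k" using kcs True by auto
      have "poly ((Lop B ^^ k) Qp) 1 = poly ((Lop B ^^ k) Pp) 1
           - (\<Sum>k'<cs. poly ((Lop B ^^ k') Pp) 1 * poly ((Lop B ^^ k) (Yp k')) 1)"
        using False True unfolding Qp_def
        by (simp add: Lop_pow_diff Lop_pow_sum Lop_pow_smult poly_sum)
      also have "(\<Sum>k'<cs. poly ((Lop B ^^ k') Pp) 1 * poly ((Lop B ^^ k) (Yp k')) 1) = poly ((Lop B ^^ k) Pp) 1"
      proof -
        have "(\<Sum>k'<cs. poly ((Lop B ^^ k') Pp) 1 * poly ((Lop B ^^ k) (Yp k')) 1)
            = (\<Sum>k'<cs. if k = k' then poly ((Lop B ^^ k') Pp) 1 else 0)"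
          by (rule sum.cong) (auto simp: Yval)
        then show ?thesis using kcs by simp
      qed
      finally show ?thesis using jk by simp
    next
      case False2: False
      then show ?thesis using False unfolding Qp_def by (simp add: Yval)
    qed
  qed
  have hiR: "(Lop B ^^ R) Qp = (Lop B ^^ R) Pp"
    if cj: "cs \<le> j" and g: "odd s \<Longrightarrow> poly ((Lop B ^^ R) Pp) 1 = 0"
  proof (cases "s \<le> j")
    case True then show ?thesis unfolding Qp_def by simp
  next
    case False
    have z: "smult (poly ((Lop B ^^ k) Pp) 1) ((Lop B ^^ R) (Yp k)) = 0" if "k < cs" for k
    proof (cases "k < R")
      case True then show ?thesis by (simp add: Yhigh)
    next
      case False
      then have "odd s" "k = R" using \<open>k < cs\<close> csR by (auto split: if_splits)
      then show ?thesis using g by simp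
    qed
    have "(\<Sum>k<cs. smult (poly ((Lop B ^^ k) Pp) 1) ((Lop B ^^ R) (Yp k))) = 0"
      by (rule sum.neutral) (use z in auto)
    then show ?thesis using False cj unfolding Qp_def by (simp add: Lop_pow_diff Lop_pow_sum Lop_pow_smult)
  qed
  define z where "z = real n - real j - real R + ?d / 2"
  have zK0: "K0 = pochhammer (z + real R) j" unfolding K0_def z_def by (simp add: algebra_simps)
  have z\<beta>: "\<beta> + 1 + real j - real R = z" unfolding \<beta>_def z_def using mreal by simp
  have cst: "K0 * (4 ^ R * pochhammer z R) = 4 ^ R * (pochhammer (z + real (j - R)) (2 * R) * pochhammer z (j - R))"
    if "R \<le> j" using poch_const[OF that, of z] unfolding zK0 by (simp add: algebra_simps)
  have cst0: "K0 * pochhammer z R = pochhammer z (j - R) * pochhammer (z + real (j - R)) (R * 2)"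
    if "R \<le> j" using poch_const[OF that, of z] unfolding zK0 by (simp add: algebra_simps)
  have gP: "genP Y \<mu> n' j' l = Rf (smult (pochhammer z (j - R)) (JP \<mu> \<beta> (j - R)))"
    if "R \<le> j" "n' - j' = int n - int j - int R" "n' - 2 * j' = int m" "j' = int j - int R" for \<mu> n' j'
  proof -
    have "0 \<le> j'" "2 * j' \<le> n'" using that by auto
    moreover have "real_of_int (n' - j') + ?d / 2 = z" using that(2) unfolding z_def by simp
    moreover have "nat j' = j - R" using that(1,4) by simp
    moreover have "real_of_int (n' - 2 * j') + ?d / 2 - 1 = \<beta>" using that(3) unfolding \<beta>_def by simp
    moreover have "nat (n' - 2 * j') = m" using that(3) by simp
    ultimately show ?thesis by (simp add: genP_eq Rf_def)
  qed
  have P2: "(laplacian ^^ (s div 2)) (Q Y s n j l) =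
              (\<lambda>x. 2 ^ s * pochhammer (real n + real DIM('a) / 2 - real s) s
                   * genP Y 0 (int n - int s) (int j - int s div 2) l x)" if ev: "even s"
  proof -
    have s2: "s = 2 * R" using ev unfolding R_def by simp
    have csR': "cs = R" using csR ev by simp
    have idv: "int s div 2 = int R" unfolding R_def by (simp add: zdiv_int)
    show ?thesis
    proof (cases "R \<le> j")
      case True
      have a: "j0f (- real s) \<beta> j \<le> R" by (rule j0f_le_v) (use True \<beta>0 s2 in simp)
      have b: "j0f (- real s + 2 * real R) \<beta> (j - R) = 0"
        using j0f_le_v[of "j - R" "- real s + 2 * real R" \<beta> 0] True \<beta>0 s2 by (simp add: of_nat_diff)
      have a0: "- real s + 2 * real R = 0" using s2 by simp
      have L: "(Lop B ^^ R) Qp = smult (K0 * (4 ^ R * pochhammer z R)) (JP 0 \<beta> (j - R))"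
        using hiR[OF _ ] shiftP[OF True a b] csR' True ev z\<beta> a0 by simp
      have G: "genP Y 0 (int n - int s) (int j - int s div 2) l = Rf (smult (pochhammer z (j - R)) (JP 0 \<beta> (j - R)))"
        by (rule gP) (use True s2 m_def assms(4) idv in auto)
      have pz: "real n + real DIM('a) / 2 - real s = z + real (j - R)" unfolding z_def using True s2 by (simp add: of_nat_diff)
      have p4: "(2::real) ^ s = 4 ^ R" unfolding s2 by (simp add: power_mult)
      show ?thesis unfolding lapQ R_def[symmetric] L G pz p4 Rf_def
        by (rule ext) (simp add: cst0[OF True] s2 algebra_simps)
    next
      case False
      then have "Qp = Yp j" unfolding Qp_def using csR' cs_le by auto
      then have "(Lop B ^^ R) Qp = 0" using False by (simp add: Yhigh)
      moreover have "genP Y 0 (int n - int s) (int j - int s div 2) l = (\<lambda>x. 0)"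
        by (rule genP_neg) (use False idv in simp)
      ultimately show ?thesis unfolding lapQ R_def[symmetric] by (simp add: R0)
    qed
  qed
  have P3a: "(laplacian ^^ (s div 2)) (Q Y s n j l) =
                 (\<lambda>x. 2 ^ (s - 1) * pochhammer (real n + real DIM('a) / 2 - real s + 1) (s - 1)
                      * genP Y (-1) (int n - int s + 1) (int j - (int s - 1) div 2) l x)"
    if od: "odd s" and jR: "j \<noteq> s div 2"
  proof -
    have s2: "s = 2 * R + 1" using od unfolding R_def by simp
    have csR': "cs = R + 1" using csR od by simp
    have idv: "(int s - 1) div 2 = int R" using s2 by simp
    show ?thesis
    proof (cases "R + 1 \<le> j")
      case True
      have RJ: "R \<le> j" using True by simp
      have a: "j0f (- real s) \<beta> j \<le> R" by (rule j0f_le_v) (use True \<beta>0 s2 in simp)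
      have b: "j0f (- real s + 2 * real R) \<beta> (j - R) = 0"
        using j0f_le_v[of "j - R" "- real s + 2 * real R" \<beta> 0] True \<beta>0 s2 by (simp add: of_nat_diff)
      have a0: "- real s + 2 * real R = -1" using s2 by simp
      have LP: "(Lop B ^^ R) Pp = smult (K0 * (4 ^ R * pochhammer z R)) (JP (-1) \<beta> (j - R))"
        using shiftP[OF RJ a b] z\<beta> a0 by simp
      have b': "j0f (-1) \<beta> (j - R) = 0" using b a0 by simp
      have g0: "poly ((Lop B ^^ R) Pp) 1 = 0"
      proof -
        have "pochhammer (-1 + 1) (j - R) = (0::real)" using True by (simp add: pochhammer_0_left)
        then have "poly (JP (-1) \<beta> (j - R)) 1 = 0" by (rule JP_at1_zero[OF b'])
        then show ?thesis unfolding LP by simp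
      qed
      have L: "(Lop B ^^ R) Qp = smult (K0 * (4 ^ R * pochhammer z R)) (JP (-1) \<beta> (j - R))"
        using hiR[OF _ g0] LP csR' True by simp
      have G: "genP Y (-1) (int n - int s + 1) (int j - (int s - 1) div 2) l = Rf (smult (pochhammer z (j - R)) (JP (-1) \<beta> (j - R)))"
        by (rule gP) (use True s2 m_def assms(4) idv in auto)
      have pz: "real n + real DIM('a) / 2 - real s + 1 = z + real (j - R)" unfolding z_def using True s2 by (simp add: of_nat_diff)
      have p4: "(2::real) ^ (s - 1) = 4 ^ R" unfolding s2 by (simp add: power_mult)
      have s1: "s - 1 = 2 * R" using s2 by simp
      show ?thesis unfolding lapQ R_def[symmetric] L G pz p4 unfolding s1 Rf_def
        by (rule ext) (simp add: cst0[OF RJ] algebra_simps)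
    next
      case False
      then have jR': "j < R" using jR unfolding R_def by simp
      then have "Qp = Yp j" unfolding Qp_def using csR' cs_le by auto
      then have "(Lop B ^^ R) Qp = 0" using jR' by (simp add: Yhigh)
      moreover have "genP Y (-1) (int n - int s + 1) (int j - (int s - 1) div 2) l = (\<lambda>x. 0)"
        by (rule genP_neg) (use jR' idv in simp)
      ultimately show ?thesis unfolding lapQ R_def[symmetric] by (simp add: R0)
    qed
  qed
  have P3b: "(laplacian ^^ (s div 2)) (Q Y s n j l) = Y (n - 2 * (s div 2)) l
               \<and> Y (n - 2 * (s div 2)) l = genP Y (-1) (int n - int s + 1) 0 l"
    if od: "odd s" and jR: "j = s div 2"
  proof -
    have s2: "s = 2 * R + 1" using od unfolding R_def by simp
    have csR': "cs = R + 1" using csR od by simp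
    have jR': "j = R" using jR unfolding R_def by simp
    have mm: "n - 2 * (s div 2) = m" unfolding m_def R_def[symmetric] jR' ..
    have "Qp = Yp j" unfolding Qp_def using csR' jR' s2 by auto
    then have "(Lop B ^^ R) Qp = [:1:]" using jR' by (simp add: Ytop)
    then have A: "(laplacian ^^ (s div 2)) (Q Y s n j l) = Y m l"
      unfolding lapQ R_def[symmetric] Rf_def by simp
    have "genP Y (-1) (int n - int s + 1) 0 l = (\<lambda>x. Y (nat (int n - int s + 1)) l x)"
      using assms(4) s2 jR' by (simp add: genP_eq JP_0)
    moreover have "nat (int n - int s + 1) = m" unfolding m_def using assms(4) s2 jR' by simp
    ultimately show ?thesis using A mm by simp
  qed
  show ?thesis
  proof (intro conjI impI allI ballI)
    fix k \<xi> assume k: "k \<le> nat \<lceil>real s / 2\<rceil> - 1" and \<xi>: "\<xi> \<in> sphere (0::'a) 1"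
    have kc: "k < cs" using k cs_le unfolding cs_def by linarith
    show "(laplacian ^^ k) (Q Y s n j l) \<xi> = (if j = k then 1 else 0) * Y (n - 2 * j) l \<xi>"
      unfolding lapQ Rsph[OF \<xi>] P1[OF kc] m_def ..
  qed (use P2 P3a P3b in auto)
qed


end
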